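(* Let $\mu\in\mathbb{R}\setminus\{0\}$ and let $g$ be the skew-symmetric-Laplace-uniform density with parameter $\mu$ (defined in the context). Then the mode $M_0$ of $g$ (the point at which $g$ attains its maximum) is $$M_0=\begin{cases}\mu & \text{if } 0<|\mu|<\tfrac12,\\ \operatorname{sign}(\mu)-\mu & \text{if } \tfrac12\le|\mu|<1,\\ 0 & \text{if } |\mu|\ge 1.\end{cases}$$
   Context: For $\mu\in\mathbb{R}\setminus\{0\}$, the skew-symmetric-Laplace-uniform distribution $SSLUD(\mu)$ is the distribution on $\mathbb{R}$ with density $$g(x)=\begin{cases} 0 & \text{if } x/\mu<-1,\\ e^{-|x|}\left(\dfrac{x}{2\mu}+\dfrac12\right) & \text{if } -1\le x/\mu<1,\\ e^{-|x|} & \text{if } x/\mu\ge 1.\end{cases}$$ *)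

theory Defs
  imports Complex_Main
begin

definition sslud_density :: "real \<Rightarrow> real \<Rightarrow> real" where
  "sslud_density \<mu> x =
     (if x / \<mu> < -1 then 0
      else if x / \<mu> < 1 then exp (- \<bar>x\<bar>) * (x / (2 * \<mu>) + 1 / 2)
      else exp (- \<bar>x\<bar>))"

definition is_mode :: "(real \<Rightarrow> real) \<Rightarrow> real \<Rightarrow> bool" where
  "is_mode g M \<longleftrightarrow> (\<forall>x. g x \<le> g M) \<and> (\<forall>y. (\<forall>x. g x \<le> g y) \<longrightarrow> y = M)"

end

theory Submission
  imports Defs
begin

lemma exp_strict: "(x::real) \<noteq> 0 \<Longrightarrow> 1 + x < exp x"
proof -
  assume x: "x \<noteq> 0"
  show ?thesis
  proof (cases "1 + x/2 \<ge> 0")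
    case True
    have "(1 + x/2)^2 \<le> exp (x/2) ^ 2"
      using True exp_ge_add_one_self[of "x/2"] by (intro power_mono) auto
    also have "exp (x/2) ^ 2 = exp x" by (simp add: power2_eq_square exp_add[symmetric])
    finally have "(1 + x/2)^2 \<le> exp x" .
    moreover have "0 < x ^ 2" using x by simp
    then have "1 + x < (1 + x/2)^2" by (simp add: power2_eq_square field_simps del: zero_less_power2)
    ultimately show ?thesis by linarith
  next
    case False
    then show ?thesis using exp_gt_zero[of x] by linarith
  qed
qed

definition modeM :: "real \<Rightarrow> real" where
  "modeM \<mu> = (if \<bar>\<mu>\<bar> < 1 / 2 then \<mu> else if \<bar>\<mu>\<bar> < 1 then sgn \<mu> - \<mu> else 0)"

lemma g_neg: "\<mu> > 0 \<Longrightarrow> x < -\<mu> \<Longrightarrow> sslud_density \<mu> x = 0"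
  by (simp add: sslud_density_def divide_less_eq)

lemma g_mid1: "\<mu> > 0 \<Longrightarrow> -\<mu> \<le> x \<Longrightarrow> x < 0 \<Longrightarrow> sslud_density \<mu> x = exp x * ((x + \<mu>) / (2*\<mu>))"
  by (simp add: sslud_density_def divide_less_eq add_divide_distrib)

lemma g_mid2: "\<mu> > 0 \<Longrightarrow> 0 \<le> x \<Longrightarrow> x < \<mu> \<Longrightarrow> sslud_density \<mu> x = exp (-x) * ((x + \<mu>) / (2*\<mu>))"
  by (simp add: sslud_density_def divide_less_eq add_divide_distrib)

lemma g_top: "\<mu> > 0 \<Longrightarrow> \<mu> \<le> x \<Longrightarrow> sslud_density \<mu> x = exp (-x)"
  by (simp add: sslud_density_def divide_less_eq)

lemma pos_case:
  assumes mu: "\<mu> > 0" and xM: "x \<noteq> modeM \<mu>"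
  shows "sslud_density \<mu> x < sslud_density \<mu> (modeM \<mu>)"
proof -
  consider (A) "\<mu> < 1/2" | (B) "1/2 \<le> \<mu>" "\<mu> < 1" | (C) "1 \<le> \<mu>" by linarith
  then show ?thesis
  proof cases
    case A
    have M: "modeM \<mu> = \<mu>" using A mu by (simp add: modeM_def)
    have gM: "sslud_density \<mu> (modeM \<mu>) = exp (-\<mu>)" using M g_top[OF mu] by simp
    have e: "exp \<mu> < 2"
    proof -
      have "1 - \<mu> < exp (-\<mu>)" using exp_strict[of "-\<mu>"] mu by simp
      then have "(1 - \<mu>) * exp \<mu> < 1" using mu by (simp add: exp_minus field_simps)
      moreover have "(1/2)*exp \<mu> \<le> (1-\<mu>)*exp \<mu>" using A by (intro mult_right_mono) auto
      ultimately show ?thesis by linarith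
    qed
    have half: "1/2 < exp (-\<mu>)" using e by (simp add: exp_minus field_simps)
    consider "x < -\<mu>" | "-\<mu> \<le> x" "x < 0" | "0 \<le> x" "x < \<mu>" | "\<mu> < x"
      using xM M by linarith
    then show ?thesis
    proof cases
      case 1 then show ?thesis using g_neg[OF mu] gM by simp
    next
      case 2
      have "exp x < 1" using 2 by simp
      moreover have "0 \<le> (x + \<mu>) / (2*\<mu>)" "(x + \<mu>) / (2*\<mu>) < 1/2" using 2 mu by (auto simp: field_simps)
      moreover have "exp x * ((x + \<mu>) / (2*\<mu>)) \<le> 1 * ((x + \<mu>) / (2*\<mu>))"
        using calculation by (intro mult_right_mono) auto
      ultimately have "exp x * ((x + \<mu>) / (2*\<mu>)) < 1/2" by linarith
      then have "sslud_density \<mu> x < 1/2" using g_mid1[OF mu 2] by simp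
      then show ?thesis using gM half by linarith
    next
      case 3
      define s where "s = \<mu> - x"
      have s: "0 < s" "s \<le> \<mu>" using 3 xM M by (auto simp: s_def)
      have "1 - s < exp (-s)" using exp_strict[of "-s"] s by simp
      then have "(1 - s) * exp s < 1" by (simp add: exp_minus field_simps)
      then have "2*\<mu>*((1 - s) * exp s) < 2*\<mu>*1" using mu by (intro mult_strict_left_mono) auto
      moreover have "(2*\<mu> - 2*\<mu>*s) * exp s = 2*\<mu>*((1 - s) * exp s)" by (simp add: algebra_simps)
      ultimately have "(2*\<mu> - 2*\<mu>*s) * exp s < 2*\<mu>" by simp
      moreover have "(2*\<mu> - s) * exp s \<le> (2*\<mu> - 2*\<mu>*s) * exp s"
      proof (rule mult_right_mono)
        have "2*\<mu>*s \<le> 1*s" using s A by (intro mult_right_mono) auto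
        then show "2*\<mu> - s \<le> 2*\<mu> - 2*\<mu>*s" by simp
      qed simp
      ultimately have "(2*\<mu> - s) * exp s < 2*\<mu>" by linarith
      then have "(x + \<mu>) * exp (\<mu> - x) < 2 * \<mu>" by (simp add: s_def add.commute)
      then have "(x + \<mu>) * exp \<mu> * exp (-x) < 2 * \<mu>" by (simp add: exp_diff exp_minus field_simps)
      then have "exp (-x) * ((x + \<mu>) / (2*\<mu>)) < exp (-\<mu>)" using mu
        by (simp add: exp_minus field_simps)
      then show ?thesis using g_mid2[OF mu 3] gM by simp
    next
      case 4 then show ?thesis using g_top[OF mu] gM by simp
    qed
  next
    case B
    have M: "modeM \<mu> = 1 - \<mu>" using B mu by (simp add: modeM_def)
    have gM: "sslud_density \<mu> (modeM \<mu>) = exp (\<mu> - 1) / (2*\<mu>)"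
    proof (cases "\<mu> = 1/2")
      case True
      have "sslud_density \<mu> \<mu> = exp (-\<mu>)" using g_top[OF mu, of \<mu>] by simp
      moreover have "1 - \<mu> = \<mu>" "\<mu> - 1 = -\<mu>" "2*\<mu> = 1" using True by simp_all
      ultimately show ?thesis unfolding M by (metis div_by_1)
    next
      case False
      then have "0 \<le> 1 - \<mu>" "1 - \<mu> < \<mu>" using B by auto
      then show ?thesis using M g_mid2[OF mu] by simp
    qed
    have key: "y \<le> exp (y - 1)" for y :: real using exp_ge_add_one_self[of "y-1"] by simp
    have keys: "y \<noteq> 1 \<Longrightarrow> y < exp (y - 1)" for y :: real using exp_strict[of "y-1"] by simp
    consider "x < -\<mu>" | "-\<mu> \<le> x" "x < 0" | "0 \<le> x" "x < \<mu>" | "\<mu> \<le> x"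
      by linarith
    then show ?thesis
    proof cases
      case 1 then show ?thesis using g_neg[OF mu] gM mu by simp
    next
      case 2
      have "exp x < 1" using 2 by simp
      moreover have "0 \<le> (x + \<mu>) / (2*\<mu>)" "(x + \<mu>) / (2*\<mu>) < 1/2" using 2 mu by (auto simp: field_simps)
      moreover have "exp x * ((x + \<mu>) / (2*\<mu>)) \<le> 1 * ((x + \<mu>) / (2*\<mu>))"
        using calculation by (intro mult_right_mono) auto
      ultimately have "exp x * ((x + \<mu>) / (2*\<mu>)) < 1/2" by linarith
      moreover have "1/2 \<le> exp (\<mu> - 1) / (2*\<mu>)" using key[of \<mu>] mu by (simp add: field_simps)
      moreover have "sslud_density \<mu> x = exp x * ((x + \<mu>) / (2*\<mu>))" using g_mid1[OF mu 2] .
      ultimately show ?thesis using gM by linarith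
    next
      case 3
      have "x + \<mu> < exp (x + \<mu> - 1)" using keys[of "x+\<mu>"] xM M by auto
      then have "exp (-x) * (x + \<mu>) < exp (\<mu> - 1)"
        by (simp add: exp_diff exp_add exp_minus field_simps)
      then have "(exp (-x) * (x + \<mu>)) / (2*\<mu>) < exp (\<mu> - 1) / (2*\<mu>)" using mu
        by (intro divide_strict_right_mono) auto
      then have "exp (-x) * ((x + \<mu>) / (2*\<mu>)) < exp (\<mu> - 1) / (2*\<mu>)" by simp
      then show ?thesis using g_mid2[OF mu 3] gM by simp
    next
      case 4
      have ee: "exp (2*\<mu> - 1) = exp (\<mu> - 1) * exp \<mu>"
        by (simp add: exp_add[symmetric])
      have "2*\<mu> \<le> exp (2*\<mu> - 1)" using key[of "2*\<mu>"] by simp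
      then have "2*\<mu> \<le> exp (\<mu> - 1) * exp \<mu>" unfolding ee .
      then have le1: "exp (-\<mu>) \<le> exp (\<mu> - 1) / (2*\<mu>)" using mu
        by (simp add: exp_minus field_simps)
      have lt2: "exp (-\<mu>) < exp (\<mu> - 1) / (2*\<mu>)" if "x = \<mu>"
      proof -
        have "\<mu> \<noteq> 1/2" using that xM M by auto
        then have "2*\<mu> < exp (2*\<mu> - 1)" using keys[of "2*\<mu>"] by simp
        then have "2*\<mu> < exp (\<mu> - 1) * exp \<mu>" unfolding ee .
        then show ?thesis using mu
          by (simp add: exp_minus field_simps)
      qed
      have "exp (-x) < exp (\<mu> - 1) / (2*\<mu>)"
      proof (cases "x = \<mu>")
        case False
        then have "exp (-x) < exp (-\<mu>)" using 4 by simp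
        then show ?thesis using le1 by linarith
      qed (use lt2 in auto)
      then show ?thesis using g_top[OF mu 4] gM by simp
    qed
  next
    case C
    have M: "modeM \<mu> = 0" using C by (simp add: modeM_def)
    have gM: "sslud_density \<mu> (modeM \<mu>) = 1/2" using M g_mid2[OF mu] mu by simp
    consider "x < -\<mu>" | "-\<mu> \<le> x" "x < 0" | "0 < x" "x < \<mu>" | "\<mu> \<le> x"
      using xM M by linarith
    then show ?thesis
    proof cases
      case 1 then show ?thesis using g_neg[OF mu] gM by simp
    next
      case 2
      have "exp x < 1" using 2 by simp
      moreover have "0 \<le> (x + \<mu>) / (2*\<mu>)" "(x + \<mu>) / (2*\<mu>) < 1/2" using 2 mu by (auto simp: field_simps)
      moreover have "exp x * ((x + \<mu>) / (2*\<mu>)) \<le> 1 * ((x + \<mu>) / (2*\<mu>))"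
        using calculation by (intro mult_right_mono) auto
      ultimately have "exp x * ((x + \<mu>) / (2*\<mu>)) < 1/2" by linarith
      moreover have "sslud_density \<mu> x = exp x * ((x + \<mu>) / (2*\<mu>))" using g_mid1[OF mu 2] .
      ultimately show ?thesis using gM by linarith
    next
      case 3
      have "1 + x < exp x" using exp_strict[of x] 3 by simp
      then have "\<mu> * (1 + x) < \<mu> * exp x" using mu by (intro mult_strict_left_mono)
      then have "\<mu> + \<mu> * x < \<mu> * exp x" by (simp add: algebra_simps)
      moreover have "x \<le> \<mu> * x" using C 3 by simp
      ultimately have "x + \<mu> < \<mu> * exp x" by linarith
      then have "exp (-x) * ((x + \<mu>) / (2*\<mu>)) < 1/2" using mu
        by (simp add: exp_minus field_simps)
      moreover have "sslud_density \<mu> x = exp (-x) * ((x + \<mu>) / (2*\<mu>))" using g_mid2[OF mu] 3 by simp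
      ultimately show ?thesis using gM by linarith
    next
      case 4
      have "2 < exp (1::real)" using exp_strict[of 1] by simp
      then have "exp (-1) < (1/2::real)" by (simp add: exp_minus field_simps)
      moreover have "exp (-x) \<le> exp (-1)" using 4 C by simp
      moreover have "sslud_density \<mu> x = exp (-x)" using g_top[OF mu 4] .
      ultimately show ?thesis using gM by linarith
    qed
  qed
qed

lemma g_sym: "sslud_density (-\<mu>) x = sslud_density \<mu> (-x)"
  by (simp add: sslud_density_def)

lemma M_sym: "modeM (-\<mu>) = - modeM \<mu>"
  by (simp add: modeM_def sgn_minus)

lemma strict_all:
  assumes "\<mu> \<noteq> 0" and "x \<noteq> modeM \<mu>"
  shows "sslud_density \<mu> x < sslud_density \<mu> (modeM \<mu>)"
proof (cases "\<mu> > 0")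
  case True then show ?thesis using pos_case assms by blast
next
  case False
  then have nu: "-\<mu> > 0" using assms by simp
  have "-x \<noteq> modeM (-\<mu>)" using assms(2) by (simp add: M_sym)
  then have "sslud_density (-\<mu>) (-x) < sslud_density (-\<mu>) (modeM (-\<mu>))" using pos_case[OF nu] by blast
  then show ?thesis by (simp add: g_sym M_sym)
qed

theorem mainTheorem4:
  fixes \<mu> :: real
  assumes "\<mu> \<noteq> 0"
  shows "is_mode (sslud_density \<mu>)
           (if \<bar>\<mu>\<bar> < 1 / 2 then \<mu>
            else if \<bar>\<mu>\<bar> < 1 then sgn \<mu> - \<mu>
            else 0)"
proof -
  have s: "\<And>x. x \<noteq> modeM \<mu> \<Longrightarrow> sslud_density \<mu> x < sslud_density \<mu> (modeM \<mu>)"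
    using strict_all[OF assms] by blast
  have "is_mode (sslud_density \<mu>) (modeM \<mu>)"
    unfolding is_mode_def
  proof (intro conjI allI impI)
    fix x show "sslud_density \<mu> x \<le> sslud_density \<mu> (modeM \<mu>)"
      using s[of x] by (cases "x = modeM \<mu>") auto
  next
    fix y assume h: "\<forall>x. sslud_density \<mu> x \<le> sslud_density \<mu> y"
    show "y = modeM \<mu>"
    proof (rule ccontr)
      assume "y \<noteq> modeM \<mu>"
      then have "sslud_density \<mu> y < sslud_density \<mu> (modeM \<mu>)" by (rule s)
      moreover have "sslud_density \<mu> (modeM \<mu>) \<le> sslud_density \<mu> y" using h by blast
      ultimately show False by linarith
    qed
  qed
  then show ?thesis by (simp add: modeM_def)
qed

end
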